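(* For any integers $a,a'>1$, if $\mathrm{L}_a\cap\mathrm{L}_{a'}\neq\emptyset$ then $a\in\mathrm{L}_{a'}$ or $a'\in\mathrm{L}_a$. Consequently, either $\mathrm{L}_a\cap\mathrm{L}_{a'}=\emptyset$, or $\mathrm{L}_a\subset\mathrm{L}_{a'}$, or $\mathrm{L}_a\supset\mathrm{L}_{a'}$.
   Context: For an integer $a>1$ let $P(a)$ be its largest prime factor and $\mathrm{L}_a=\{ba: b\in\mathbb{N},\ \text{every prime } p\mid b \text{ satisfies } p\ge P(a)\}$. *)

theory Defs
  imports "HOL-Computational_Algebra.Primes"
begin

definition gpf :: "nat \<Rightarrow> nat" where
  "gpf a = Max (prime_factors a)"

definition Lset :: "nat \<Rightarrow> nat set" where
  "Lset a = {b * a | b. b \<ge> 1 \<and> (\<forall>p. prime p \<and> p dvd b \<longrightarrow> p \<ge> gpf a)}"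

end

theory Submission
  imports Defs
begin

lemma gpf_facts:
  assumes "(a::nat) > 1"
  shows "prime (gpf a)" "gpf a dvd a" "\<And>q. prime q \<Longrightarrow> q dvd a \<Longrightarrow> q \<le> gpf a"
proof -
  have fin: "finite (prime_factors a)" by simp
  obtain p where "prime p" "p dvd a" using prime_factor_nat[of a] assms by auto
  then have ne: "prime_factors a \<noteq> {}" using assms by (auto simp: prime_factors_dvd)
  have "gpf a \<in> prime_factors a" unfolding gpf_def using Max_in[OF fin ne] .
  then show "prime (gpf a)" "gpf a dvd a" by auto
  fix q assume "prime q" "q dvd a"
  then have "q \<in> prime_factors a" using assms by (auto simp: prime_factors_dvd)
  then show "q \<le> gpf a" unfolding gpf_def using fin by simp
qed

lemma mult_eq_small:
  assumes "prime (q::nat)" "\<not> q dvd b" "b \<ge> 1" "a \<ge> 1"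
  shows "multiplicity q (b * a) = multiplicity q a"
proof -
  have "multiplicity q (b * a) = multiplicity q b + multiplicity q a"
    using assms by (intro prime_elem_multiplicity_mult_distrib) auto
  moreover have "multiplicity q b = 0" using assms(2) by (rule not_dvd_imp_multiplicity_0)
  ultimately show ?thesis by simp
qed

lemma key:
  fixes a a' b b' :: nat
  assumes a: "a > 1" and a': "a' > 1" and eq: "b * a = b' * a'"
    and b: "b \<ge> 1" and b': "b' \<ge> 1"
    and pb: "\<forall>p. prime p \<and> p dvd b \<longrightarrow> p \<ge> gpf a"
    and pb': "\<forall>p. prime p \<and> p dvd b' \<longrightarrow> p \<ge> gpf a'"
    and le: "gpf a \<le> gpf a'"
    and h: "gpf a < gpf a' \<or> multiplicity (gpf a) a \<le> multiplicity (gpf a) a'"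
  shows "a' \<in> Lset a"
proof -
  note G = gpf_facts[OF a]
  have small: "multiplicity q a = multiplicity q a'" if q: "prime q" "q < gpf a" for q
  proof -
    have "\<not> q dvd b" using pb q not_le by blast
    moreover have "\<not> q dvd b'" using pb' q le by (meson le_trans not_le)
    ultimately have "multiplicity q (b * a) = multiplicity q a" "multiplicity q (b' * a') = multiplicity q a'"
      using mult_eq_small[of q b a] mult_eq_small[of q b' a'] q a a' b b' by auto
    then show ?thesis using eq by simp
  qed
  have dv: "a dvd a'"
  proof (rule multiplicity_le_imp_dvd)
    show "a \<noteq> 0" using a by simp
    fix q :: nat assume q: "prime q"
    consider "q < gpf a" | "q = gpf a" | "q > gpf a" by linarith
    then show "multiplicity q a \<le> multiplicity q a'"
    proof cases
      case 1 then show ?thesis using small q by simp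
    next
      case 2
      show ?thesis
      proof (cases "gpf a < gpf a'")
        case True
        have "\<not> q dvd b'" using pb' q True 2 not_le by blast
        then have "multiplicity q a' = multiplicity q (b * a)"
          using mult_eq_small[of q b' a'] q a' b' eq by simp
        also have "\<dots> = multiplicity q b + multiplicity q a"
          using q a b by (intro prime_elem_multiplicity_mult_distrib) auto
        finally show ?thesis by simp
      next
        case False then show ?thesis using h 2 by simp
      qed
    next
      case 3
      then have "\<not> q dvd a" using G(3)[OF q] not_le by blast
      then show ?thesis by (simp add: not_dvd_imp_multiplicity_0)
    qed
  qed
  then obtain c where c: "a' = c * a" by (metis dvd_def mult.commute)
  have c1: "c \<ge> 1" using c a' by (cases c) auto
  have "\<forall>p. prime p \<and> p dvd c \<longrightarrow> p \<ge> gpf a"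
  proof (intro allI impI, rule ccontr)
    fix p assume p: "prime p \<and> p dvd c" and n: "\<not> gpf a \<le> p"
    have "multiplicity p a' = multiplicity p c + multiplicity p a"
      using c p c1 a by (simp add: prime_elem_multiplicity_mult_distrib)
    moreover have "multiplicity p c \<noteq> 0" using p c1 by (simp add: prime_elem_multiplicity_eq_zero_iff)
    moreover have "multiplicity p a = multiplicity p a'" using small p n by simp
    ultimately show False by simp
  qed
  then show ?thesis unfolding Lset_def using c c1 by blast
qed

lemma sub:
  fixes a a' :: nat
  assumes a: "a > 1" and a': "a' > 1" and m: "a' \<in> Lset a"
  shows "Lset a' \<subseteq> Lset a"
proof
  obtain c where c: "a' = c * a" "c \<ge> 1" and pc: "\<forall>p. prime p \<and> p dvd c \<longrightarrow> p \<ge> gpf a"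
    using m unfolding Lset_def by blast
  have le: "gpf a \<le> gpf a'"
    using gpf_facts[OF a] gpf_facts(3)[OF a', of "gpf a"] c by force
  fix x assume "x \<in> Lset a'"
  then obtain b where b: "x = b * a'" "b \<ge> 1" and pb: "\<forall>p. prime p \<and> p dvd b \<longrightarrow> p \<ge> gpf a'"
    unfolding Lset_def by blast
  have "x = (b * c) * a" using b c by simp
  moreover have "b * c \<ge> 1" using b c by simp
  moreover have "\<forall>p. prime p \<and> p dvd (b * c) \<longrightarrow> p \<ge> gpf a"
    using pb pc le by (metis le_trans prime_dvd_mult_iff)
  ultimately show "x \<in> Lset a" unfolding Lset_def by blast
qed

theorem lemma2p1:
  fixes a a' :: nat
  assumes "a > 1" and "a' > 1"
  shows "(Lset a \<inter> Lset a' \<noteq> {} \<longrightarrow> a \<in> Lset a' \<or> a' \<in> Lset a)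
       \<and> (Lset a \<inter> Lset a' = {} \<or> Lset a \<subseteq> Lset a' \<or> Lset a' \<subseteq> Lset a)"
proof -
  have 1: "a \<in> Lset a' \<or> a' \<in> Lset a" if ne: "Lset a \<inter> Lset a' \<noteq> {}"
  proof -
    obtain x where "x \<in> Lset a" "x \<in> Lset a'" using ne by blast
    then obtain b b' where e: "x = b * a" "b \<ge> 1" "\<forall>p. prime p \<and> p dvd b \<longrightarrow> p \<ge> gpf a"
      and e': "x = b' * a'" "b' \<ge> 1" "\<forall>p. prime p \<and> p dvd b' \<longrightarrow> p \<ge> gpf a'"
      unfolding Lset_def by blast
    consider "gpf a < gpf a'" | "gpf a' < gpf a"
      | "gpf a = gpf a'" "multiplicity (gpf a) a \<le> multiplicity (gpf a) a'"
      | "gpf a = gpf a'" "multiplicity (gpf a') a' \<le> multiplicity (gpf a') a" by (metis linorder_neqE_nat nat_le_linear)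
    then show ?thesis
    proof cases
      case 1 then show ?thesis using key[OF assms, of b b'] e e' by simp
    next
      case 2 then show ?thesis using key[OF assms(2,1), of b' b] e e' by simp
    next
      case 3 then show ?thesis using key[OF assms, of b b'] e e' by simp
    next
      case 4 then show ?thesis using key[OF assms(2,1), of b' b] e e' by simp
    qed
  qed
  show ?thesis using 1 sub[OF assms] sub[OF assms(2,1)] by blast
qed

end
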